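(* Let $(X,d)$ be a complete metric space and $(\mathbb{H}(X),h)$ the space of nonempty compact subsets of $X$ with the Hausdorff metric. For each $i\in\mathbb{N}$ let $\mathcal{F}_i=\{X; f_{1,i},\dots,f_{n_i,i}\}$ be a finite family of Lipschitz maps $f_{r,i}:X\to X$, with associated set map $\mathcal{F}_i(A)=\bigcup_{r=1}^{n_i} f_{r,i}(A)$ on $\mathbb{H}(X)$, and let $L_{\mathcal{F}_i}=\max_{1\le r\le n_i}\mathrm{Lip}(f_{r,i})$. Suppose $\lim_{k\to\infty}\prod_{i=1}^k L_{\mathcal{F}_i}=0$. Let $\Phi_k=\mathcal{F}_k\circ\cdots\circ\mathcal{F}_1$ and $\Psi_k=\mathcal{F}_1\circ\cdots\circ\mathcal{F}_k$. Then for all $A,B\in\mathbb{H}(X)$, $h(\Phi_k(A),\Phi_k(B))\to 0$ and $h(\Psi_k(A),\Psi_k(B))\to0$ as $k\to\infty$.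
   Context: The Hausdorff metric is $h(B,C)=\max\{d(B,C),d(C,B)\}$ with $d(B,C)=\sup_{b\in B}\inf_{c\in C}d(b,c)$. $\mathrm{Lip}(f)=\sup_{x\ne y}d(f(x),f(y))/d(x,y)$. *)

theory Defs
  imports "HOL-Analysis.Analysis"
begin

definition hexcess :: "'a::metric_space set \<Rightarrow> 'a set \<Rightarrow> real" where
  "hexcess B C = (SUP b\<in>B. infdist b C)"

definition hausdorff :: "'a::metric_space set \<Rightarrow> 'a set \<Rightarrow> real" where
  "hausdorff B C = max (hexcess B C) (hexcess C B)"

text \<open>Lipschitz constant Lip(f) = sup of d(f x, f y)/d(x,y) over x \<noteq> y
  (0 is added to the set only so that the value is 0 on a one-point space).\<close>
definition Lip :: "('a::metric_space \<Rightarrow> 'b::metric_space) \<Rightarrow> real" where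
  "Lip f = Sup ({0} \<union> {dist (f x) (f y) / dist x y | x y. x \<noteq> y})"

definition famap :: "(nat \<Rightarrow> nat \<Rightarrow> 'a \<Rightarrow> 'a) \<Rightarrow> (nat \<Rightarrow> nat) \<Rightarrow> nat \<Rightarrow> 'a set \<Rightarrow> 'a set" where
  "famap f n i A = (\<Union>r\<in>{1..n i}. f r i ` A)"

definition famLip :: "(nat \<Rightarrow> nat \<Rightarrow> 'a::metric_space \<Rightarrow> 'a) \<Rightarrow> (nat \<Rightarrow> nat) \<Rightarrow> nat \<Rightarrow> real" where
  "famLip f n i = Max ((\<lambda>r. Lip (f r i)) ` {1..n i})"

fun Phi :: "(nat \<Rightarrow> 'a set \<Rightarrow> 'a set) \<Rightarrow> nat \<Rightarrow> 'a set \<Rightarrow> 'a set" where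
  "Phi F 0 A = A"
| "Phi F (Suc k) A = F (Suc k) (Phi F k A)"

fun Psi :: "(nat \<Rightarrow> 'a set \<Rightarrow> 'a set) \<Rightarrow> nat \<Rightarrow> 'a set \<Rightarrow> 'a set" where
  "Psi F 0 A = A"
| "Psi F (Suc k) A = Psi F k (F (Suc k) A)"

end

theory Submission
  imports Defs
begin

lemma infdist_attains_compact:
  fixes C :: "'a::metric_space set"
  assumes "compact C" "C \<noteq> {}"
  shows "\<exists>y\<in>C. infdist x C = dist x y"
proof -
  have "continuous_on C (dist x)" by (intro continuous_intros)
  then obtain y where y: "y \<in> C" "\<And>z. z \<in> C \<Longrightarrow> dist x y \<le> dist x z"
    using continuous_attains_inf[OF assms] by blast
  have "infdist x C \<le> dist x y" using y(1) by (rule infdist_le)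
  moreover have "dist x y \<le> infdist x C"
    unfolding infdist_def using assms y by (auto intro: cINF_greatest)
  ultimately show ?thesis using y by auto
qed

lemma hexcess_upper:
  fixes B C :: "'a::metric_space set"
  assumes "compact B" "x \<in> B"
  shows "infdist x C \<le> hexcess B C"
proof -
  have "compact ((\<lambda>b. infdist b C) ` B)"
    by (intro compact_continuous_image continuous_intros assms)
  then have "bdd_above ((\<lambda>b. infdist b C) ` B)"
    by (intro bounded_imp_bdd_above compact_imp_bounded)
  then show ?thesis unfolding hexcess_def using assms by (intro cSUP_upper)
qed

lemma hexcess_nonneg:
  fixes B C :: "'a::metric_space set"
  assumes "compact B" "B \<noteq> {}"
  shows "0 \<le> hexcess B C"
  using assms hexcess_upper infdist_nonneg by (metis equals0I order_trans)

lemma hausdorff_nonneg: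
  fixes B C :: "'a::metric_space set"
  assumes "compact B" "B \<noteq> {}"
  shows "0 \<le> hausdorff B C"
  using hexcess_nonneg[OF assms, of C] unfolding hausdorff_def by linarith

lemma hexcess_le:
  fixes B C :: "'a::metric_space set"
  assumes "B \<noteq> {}" "\<And>x. x \<in> B \<Longrightarrow> \<exists>y\<in>C. dist x y \<le> b"
  shows "hexcess B C \<le> b"
  unfolding hexcess_def using assms by (auto intro!: cSUP_least intro: infdist_le2)

lemma hausdorff_near:
  fixes B C :: "'a::metric_space set"
  assumes "compact B" "compact C" "C \<noteq> {}" "x \<in> B"
  shows "\<exists>y\<in>C. dist x y \<le> hausdorff B C"
proof -
  obtain y where "y \<in> C" "infdist x C = dist x y"
    using infdist_attains_compact[OF assms(2,3)] by blast
  moreover have "infdist x C \<le> hausdorff B C"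
    using hexcess_upper[OF assms(1,4), of C] unfolding hausdorff_def by auto
  ultimately show ?thesis by auto
qed

lemma Lip_bound:
  fixes g :: "'a::metric_space \<Rightarrow> 'b::metric_space"
  assumes "C-lipschitz_on UNIV g"
  shows "dist (g x) (g y) \<le> Lip g * dist x y" and "0 \<le> Lip g"
proof -
  let ?S = "{0} \<union> {dist (g x) (g y) / dist x y | x y. x \<noteq> y}"
  have bd: "bdd_above ?S"
  proof (rule bdd_aboveI[where M = "max 0 C"])
    fix z assume "z \<in> ?S"
    then show "z \<le> max 0 C"
    proof
      assume "z \<in> {dist (g x) (g y) / dist x y | x y. x \<noteq> y}"
      then obtain u v where "u \<noteq> v" "z = dist (g u) (g v) / dist u v" by blast
      moreover have "dist (g u) (g v) \<le> C * dist u v"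
        using assms by (auto simp: lipschitz_on_def)
      moreover have "C * dist u v \<le> max 0 C * dist u v" by (intro mult_right_mono) auto
      ultimately have "dist (g u) (g v) \<le> max 0 C * dist u v" "0 < dist u v"
        by (meson order_trans, simp)
      then show ?thesis using \<open>z = _\<close> by (simp add: divide_le_eq)
    qed auto
  qed
  show "0 \<le> Lip g" unfolding Lip_def using bd by (intro cSup_upper) auto
  show "dist (g x) (g y) \<le> Lip g * dist x y"
  proof (cases "x = y")
    case False
    then have "dist (g x) (g y) / dist x y \<le> Lip g"
      unfolding Lip_def using bd by (intro cSup_upper) auto
    then show ?thesis using False by (simp add: divide_le_eq mult.commute)
  qed simp
qed

context
  fixes f :: "nat \<Rightarrow> nat \<Rightarrow> 'a::metric_space \<Rightarrow> 'a"
    and n :: "nat \<Rightarrow> nat"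
  assumes n_pos: "\<And>i. i \<ge> 1 \<Longrightarrow> n i \<ge> 1"
    and lip: "\<And>i r. i \<ge> 1 \<Longrightarrow> r \<in> {1..n i} \<Longrightarrow> \<exists>C. C-lipschitz_on UNIV (f r i)"
begin

lemma famLip_ge:
  assumes "i \<ge> 1" "r \<in> {1..n i}"
  shows "Lip (f r i) \<le> famLip f n i"
  unfolding famLip_def using assms by (intro Max_ge) auto

lemma famLip_nonneg:
  assumes "i \<ge> 1"
  shows "0 \<le> famLip f n i"
proof -
  have r: "1 \<in> {1..n i}" using n_pos[OF assms] by auto
  obtain C where "C-lipschitz_on UNIV (f 1 i)" using lip[OF assms r] by blast
  then have "0 \<le> Lip (f 1 i)" by (rule Lip_bound)
  with famLip_ge[OF assms r] show ?thesis by linarith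
qed

lemma famap_compact:
  assumes "i \<ge> 1" "compact A" "A \<noteq> {}"
  shows "compact (famap f n i A) \<and> famap f n i A \<noteq> {}"
proof
  show "compact (famap f n i A)" unfolding famap_def
  proof (intro compact_UN ballI)
    fix r assume r: "r \<in> {1..n i}"
    obtain C where "C-lipschitz_on UNIV (f r i)" using lip[OF assms(1) r] by blast
    then have "continuous_on UNIV (f r i)" by (rule lipschitz_on_continuous_on)
    then show "compact (f r i ` A)"
      using assms(2) by (metis compact_continuous_image continuous_on_subset top_greatest)
  qed auto
  show "famap f n i A \<noteq> {}"
    unfolding famap_def using n_pos[OF assms(1)] assms(3) by auto
qed

lemma famap_contract:
  assumes i: "i \<ge> 1" and A: "compact A" "A \<noteq> {}" and B: "compact B" "B \<noteq> {}"
  shows "hausdorff (famap f n i A) (famap f n i B) \<le> famLip f n i * hausdorff A B"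
proof -
  have side: "hexcess (famap f n i X) (famap f n i Y) \<le> famLip f n i * hausdorff A B"
    if XY: "(X = A \<and> Y = B) \<or> (X = B \<and> Y = A)" for X Y
  proof -
    have X: "compact X" "X \<noteq> {}" and Y: "compact Y" "Y \<noteq> {}" using XY A B by auto
    have hs: "hausdorff X Y = hausdorff A B" using XY unfolding hausdorff_def by auto
    show ?thesis
    proof (rule hexcess_le)
      show "famap f n i X \<noteq> {}" using famap_compact[OF i X] by blast
      fix z assume "z \<in> famap f n i X"
      then obtain r x where r: "r \<in> {1..n i}" and x: "x \<in> X" and z: "z = f r i x"
        unfolding famap_def by blast
      obtain y where y: "y \<in> Y" "dist x y \<le> hausdorff X Y"
        using hausdorff_near[OF X(1) Y(1) Y(2) x] by blast
      obtain C where C: "C-lipschitz_on UNIV (f r i)" using lip[OF i r] by blast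
      have "dist z (f r i y) \<le> Lip (f r i) * dist x y" using Lip_bound(1)[OF C] z by simp
      also have "\<dots> \<le> famLip f n i * hausdorff A B"
        using y hs famLip_ge[OF i r] Lip_bound(2)[OF C]
        by (intro mult_mono) auto
      finally show "\<exists>w\<in>famap f n i Y. dist z w \<le> famLip f n i * hausdorff A B"
        using y r unfolding famap_def by blast
    qed
  qed
  show ?thesis using side[of A B] side[of B A] unfolding hausdorff_def[of "famap f n i A"] by auto
qed

lemma Phi_bound:
  assumes A: "compact A" "A \<noteq> {}" and B: "compact B" "B \<noteq> {}"
  shows "compact (Phi (famap f n) k A) \<and> Phi (famap f n) k A \<noteq> {} \<and>
         compact (Phi (famap f n) k B) \<and> Phi (famap f n) k B \<noteq> {} \<and>
         hausdorff (Phi (famap f n) k A) (Phi (famap f n) k B) \<le> (\<Prod>i=1..k. famLip f n i) * hausdorff A B"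
proof (induction k)
  case 0 then show ?case using A B by simp
next
  case (Suc k)
  let ?A = "Phi (famap f n) k A" and ?B = "Phi (famap f n) k B"
  have c: "compact ?A" "?A \<noteq> {}" "compact ?B" "?B \<noteq> {}" using Suc by auto
  have "hausdorff (famap f n (Suc k) ?A) (famap f n (Suc k) ?B) \<le> famLip f n (Suc k) * hausdorff ?A ?B"
    using famap_contract[of "Suc k"] c by auto
  also have "\<dots> \<le> famLip f n (Suc k) * ((\<Prod>i=1..k. famLip f n i) * hausdorff A B)"
    using Suc famLip_nonneg[of "Suc k"] by (intro mult_left_mono) auto
  also have "\<dots> = (\<Prod>i=1..Suc k. famLip f n i) * hausdorff A B"
    by (simp add: prod.nat_ivl_Suc' mult_ac)
  finally show ?case using famap_compact[of "Suc k"] c by auto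
qed

lemma Psi_bound:
  "compact A \<Longrightarrow> A \<noteq> {} \<Longrightarrow> compact B \<Longrightarrow> B \<noteq> {} \<Longrightarrow>
   compact (Psi (famap f n) k A) \<and> Psi (famap f n) k A \<noteq> {} \<and>
   hausdorff (Psi (famap f n) k A) (Psi (famap f n) k B) \<le> (\<Prod>i=1..k. famLip f n i) * hausdorff A B"
proof (induction k arbitrary: A B)
  case 0 then show ?case by simp
next
  case (Suc k)
  let ?A = "famap f n (Suc k) A" and ?B = "famap f n (Suc k) B"
  have c: "compact ?A" "?A \<noteq> {}" "compact ?B" "?B \<noteq> {}"
    using famap_compact[of "Suc k"] Suc.prems by auto
  have P: "0 \<le> (\<Prod>i=1..k. famLip f n i)" using famLip_nonneg by (intro prod_nonneg) auto
  have "hausdorff (Psi (famap f n) k ?A) (Psi (famap f n) k ?B) \<le> (\<Prod>i=1..k. famLip f n i) * hausdorff ?A ?B"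
    using Suc.IH[OF c] by auto
  also have "\<dots> \<le> (\<Prod>i=1..k. famLip f n i) * (famLip f n (Suc k) * hausdorff A B)"
    using famap_contract[of "Suc k" A B] Suc.prems P by (intro mult_left_mono) auto
  also have "\<dots> = (\<Prod>i=1..Suc k. famLip f n i) * hausdorff A B"
    by (simp add: prod.nat_ivl_Suc' mult_ac)
  finally show ?case using Suc.IH[OF c] by simp
qed

end

lemma squeeze0:
  fixes u P :: "nat \<Rightarrow> real"
  assumes "\<And>k. 0 \<le> u k" "\<And>k. u k \<le> P k * c" "P \<longlonglongrightarrow> 0"
  shows "u \<longlonglongrightarrow> 0"
proof -
  have "(\<lambda>k. P k * c) \<longlonglongrightarrow> 0 * c" by (intro tendsto_intros assms)
  then show ?thesis using assms by (intro tendsto_sandwich[of "\<lambda>_. 0" u _ "\<lambda>k. P k * c"]) auto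
qed

theorem mainTheorem5:
  fixes f :: "nat \<Rightarrow> nat \<Rightarrow> 'a::{metric_space, complete_space} \<Rightarrow> 'a"
    and n :: "nat \<Rightarrow> nat"
    and A B :: "'a set"
  assumes n_pos: "\<And>i. i \<ge> 1 \<Longrightarrow> n i \<ge> 1"
    and lip: "\<And>i r. i \<ge> 1 \<Longrightarrow> r \<in> {1..n i} \<Longrightarrow> \<exists>C. C-lipschitz_on UNIV (f r i)"
    and prod_lim: "(\<lambda>k. \<Prod>i=1..k. famLip f n i) \<longlonglongrightarrow> 0"
    and A: "compact A" "A \<noteq> {}"
    and B: "compact B" "B \<noteq> {}"
  shows "(\<lambda>k. hausdorff (Phi (famap f n) k A) (Phi (famap f n) k B)) \<longlonglongrightarrow> 0 \<and>
         (\<lambda>k. hausdorff (Psi (famap f n) k A) (Psi (famap f n) k B)) \<longlonglongrightarrow> 0"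
proof
  note PB = Phi_bound[of n f, OF n_pos lip A B]
  note QB = Psi_bound[of n f, OF n_pos lip A B]
  show "(\<lambda>k. hausdorff (Phi (famap f n) k A) (Phi (famap f n) k B)) \<longlonglongrightarrow> 0"
    by (rule squeeze0[OF _ _ prod_lim]) (use PB hausdorff_nonneg in auto)
  show "(\<lambda>k. hausdorff (Psi (famap f n) k A) (Psi (famap f n) k B)) \<longlonglongrightarrow> 0"
    by (rule squeeze0[OF _ _ prod_lim]) (use QB hausdorff_nonneg in auto)
qed

end
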